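(* Let $n=3$, and let $(\mu,\Sigma)$ satisfy the normalization below, with $X\sim\mathcal{N}(\mu,\Sigma)$. For each $i\in\{1,2,3\}$, the quantity $\alpha_i$ defined below is identifiable from the three-way ranking probabilities. That is, suppose $(\mu',\Sigma')$ also satisfies the normalization, with associated quantities $\alpha'_i$. If $\Pr\{X_a\ge X_b\ge X_c\}=\Pr\{X'_a\ge X'_b\ge X'_c\}$ for all permutations $(a,b,c)$ of $\{1,2,3\}$, where $X'\sim\mathcal{N}(\mu',\Sigma')$, then $\alpha_i=\alpha'_i$ for $i=1,2,3$.
   Context: Normalization: $\mu \in \mathbb{R}^3$, $\Sigma \in \mathbb{R}^{3\times 3}$ symmetric positive semidefinite, $\langle\mu,\mathbf{1}\rangle=0$, $\Sigma\mathbf{1}=0$, $\operatorname{Tr}(\Sigma)=3$, and $\operatorname{rank}(\Sigma)=2$. Let $$P=\begin{bmatrix}1/\sqrt6&1/\sqrt6&-2/\sqrt6\\ 1/\sqrt2&-1/\sqrt2&0\end{bmatrix}$$ and $V=PX\sim\mathcal{N}(\dot\mu,\dot\Sigma)$, with $\dot\mu=P\mu$ and $\dot\Sigma=P\Sigma P^\top$. Let $c_1=(0,1)^\top$, $c_2=(\sqrt3/2,-1/2)^\top$, and $c_3=(\sqrt3/2,1/2)^\top$. Let $\dot\Sigma^{-1/2}$ be any $2\times2$ matrix with $\dot\Sigma^{-1/2}\dot\Sigma(\dot\Sigma^{-1/2})^\top=I$, and set $\dot\Sigma^{1/2}:=((\dot\Sigma^{-1/2})^{-1})^\top$. Define $\tilde\mu=\dot\Sigma^{-1/2}\dot\mu$,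 $\tilde c_i=\dot\Sigma^{1/2}c_i/\|\dot\Sigma^{1/2}c_i\|$, and $\alpha_i=\tilde c_i^\top\tilde\mu$. The value of $\alpha_i$ does not depend on the choice of $\dot\Sigma^{-1/2}$. *)

theory Defs
  imports "HOL-Analysis.Analysis" "HOL-Probability.Probability"
begin

definition std_gauss3 :: "(real^3) measure" where
  "std_gauss3 = density lborel (\<lambda>z. ennreal (\<Prod>i\<in>UNIV. std_normal_density (z$i)))"

text \<open>Multivariate normal N(mu,Sigma) (possibly degenerate): law of mu + A z with
  A A^T = Sigma and z standard Gaussian.\<close>
definition gauss3 :: "real^3 \<Rightarrow> real^3^3 \<Rightarrow> (real^3) measure" where
  "gauss3 \<mu> \<Sigma> = distr std_gauss3 borel
     (\<lambda>z. \<mu> + (SOME A :: real^3^3. A ** transpose A = \<Sigma>) *v z)"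

definition rank_prob :: "real^3 \<Rightarrow> real^3^3 \<Rightarrow> 3 \<Rightarrow> 3 \<Rightarrow> 3 \<Rightarrow> real" where
  "rank_prob \<mu> \<Sigma> a b c = measure (gauss3 \<mu> \<Sigma>) {x. x$a \<ge> x$b \<and> x$b \<ge> x$c}"

definition normalized :: "real^3 \<Rightarrow> real^3^3 \<Rightarrow> bool" where
  "normalized \<mu> \<Sigma> \<longleftrightarrow>
     transpose \<Sigma> = \<Sigma> \<and> (\<forall>x. 0 \<le> x \<bullet> (\<Sigma> *v x)) \<and>
     \<mu> \<bullet> (1::real^3) = 0 \<and> \<Sigma> *v (1::real^3) = 0 \<and>
     trace \<Sigma> = 3 \<and> rank \<Sigma> = 2"

definition Pmat :: "real^3^2" where
  "Pmat = vector [vector [1/sqrt 6, 1/sqrt 6, -2/sqrt 6],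
                  vector [1/sqrt 2, -1/sqrt 2, 0]]"

definition cvec :: "3 \<Rightarrow> real^2" where
  "cvec i = (if i = 1 then vector [0, 1]
             else if i = 2 then vector [sqrt 3/2, -1/2]
             else vector [sqrt 3/2, 1/2])"

definition alpha :: "real^3 \<Rightarrow> real^3^3 \<Rightarrow> 3 \<Rightarrow> real" where
  "alpha \<mu> \<Sigma> i =
     (let Sd = Pmat ** \<Sigma> ** transpose Pmat;
          W = (SOME W :: real^2^2. W ** Sd ** transpose W = mat 1);
          Sh = transpose (matrix_inv W);
          mut = W *v (Pmat *v \<mu>);
          ct = (1 / norm (Sh *v cvec i)) *\<^sub>R (Sh *v cvec i)
      in ct \<bullet> mut)"

end

theory Submission
  imports Defs
begin

definition NN :: "real measure" where "NN = density lborel std_normal_density"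

lemma prob_NN: "prob_space NN"
  unfolding NN_def by (rule prob_space_normal_density) simp

lemma sets_NN[measurable_cong, simp]: "sets NN = sets borel"
  by (simp add: NN_def)

lemma ps_NN: "product_sigma_finite (\<lambda>_::'i. NN)"
  unfolding product_sigma_finite_def
  using prob_space_imp_sigma_finite[OF prob_NN] by simp

lemma ps_lborel: "product_sigma_finite (\<lambda>_::'i. lborel :: real measure)"
  unfolding product_sigma_finite_def using lborel.sigma_finite_measure_axioms by simp

lemma PiM_density_NN:
  fixes I :: "'i set" assumes fin: "finite I"
  shows "density (PiM I (\<lambda>_. lborel)) (\<lambda>x. \<Prod>i\<in>I. ennreal (std_normal_density (x i))) = PiM I (\<lambda>_. NN)"
proof (rule product_sigma_finite.PiM_eqI[OF ps_NN fin])
  show "sets (density (PiM I (\<lambda>_. lborel)) (\<lambda>x. \<Prod>i\<in>I. ennreal (std_normal_density (x i)))) = sets (PiM I (\<lambda>_. NN))"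
    unfolding sets_density by (rule sets_PiM_cong) simp_all
next
  fix A assume A: "\<And>i. i \<in> I \<Longrightarrow> A i \<in> sets NN"
  have AI: "Pi\<^sub>E I A \<in> sets (PiM I (\<lambda>_. lborel))"
    using A by (auto intro!: sets_PiM_I_finite fin)
  have "emeasure (density (PiM I (\<lambda>_. lborel)) (\<lambda>x. \<Prod>i\<in>I. ennreal (std_normal_density (x i)))) (Pi\<^sub>E I A)
     = (\<integral>\<^sup>+x. (\<Prod>i\<in>I. ennreal (std_normal_density (x i))) * indicator (Pi\<^sub>E I A) x \<partial>PiM I (\<lambda>_. lborel))"
    using AI by (subst emeasure_density) auto
  also have "\<dots> = (\<integral>\<^sup>+x. (\<Prod>i\<in>I. ennreal (std_normal_density (x i)) * indicator (A i) (x i)) \<partial>PiM I (\<lambda>_. lborel))"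
  proof (rule nn_integral_cong)
    fix x assume x: "x \<in> space (PiM I (\<lambda>_. lborel :: real measure))"
    have "indicator (Pi\<^sub>E I A) x = (\<Prod>i\<in>I. indicator (A i) (x i) :: ennreal)"
    proof (cases "\<forall>i\<in>I. x i \<in> A i")
      case True
      then have "x \<in> Pi\<^sub>E I A" using x by (auto simp: space_PiM PiE_def)
      then show ?thesis using True by simp
    next
      case False
      then have "x \<notin> Pi\<^sub>E I A" by auto
      moreover have "(\<Prod>i\<in>I. indicator (A i) (x i) :: ennreal) = 0"
      proof -
        from False obtain j where j: "j \<in> I" "x j \<notin> A j" by auto
        show ?thesis using j by (intro prod_zero[OF fin] bexI[where x=j]) simp_all
      qed
      ultimately show ?thesis by simp
    qed
    then show "(\<Prod>i\<in>I. ennreal (std_normal_density (x i))) * indicator (Pi\<^sub>E I A) x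
      = (\<Prod>i\<in>I. ennreal (std_normal_density (x i)) * indicator (A i) (x i))"
      by (simp add: prod.distrib)
  qed
  also have "\<dots> = (\<Prod>i\<in>I. (\<integral>\<^sup>+x. ennreal (std_normal_density x) * indicator (A i) x \<partial>lborel))"
    using A by (subst product_sigma_finite.product_nn_integral_prod[OF ps_lborel fin]) auto
  also have "\<dots> = (\<Prod>i\<in>I. emeasure NN (A i))"
    using A by (intro prod.cong refl) (simp add: NN_def emeasure_density)
  finally show "emeasure (density (PiM I (\<lambda>_. lborel)) (\<lambda>x. \<Prod>i\<in>I. ennreal (std_normal_density (x i)))) (Pi\<^sub>E I A) = (\<Prod>i\<in>I. emeasure NN (A i))" .
qed

definition MM :: "((real^3) \<Rightarrow> real) measure" where "MM = PiM Basis (\<lambda>_. NN)"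
definition Tm :: "((real^3) \<Rightarrow> real) \<Rightarrow> real^3" where "Tm f = (\<Sum>b\<in>Basis. f b *\<^sub>R b)"

lemma Tm_inner: "b \<in> Basis \<Longrightarrow> Tm f \<bullet> b = f b"
  by (simp add: Tm_def inner_sum_left inner_Basis if_distrib cong: if_cong)

lemma Tm_comp: "Tm f $ i = f (axis i 1)"
proof -
  have "axis i (1::real) \<in> Basis" by (auto simp: Basis_vec_def)
  then show ?thesis by (simp add: cart_eq_inner_axis Tm_inner)
qed

lemma Basis3: "(Basis :: (real^3) set) = range (\<lambda>i. axis i 1)"
  by (auto simp: Basis_vec_def)

lemma prod_Basis3: "(\<Prod>b\<in>(Basis::(real^3) set). h b) = (\<Prod>i\<in>UNIV. h (axis i 1))"
  by (simp add: Basis3 prod.reindex inj_on_def axis_eq_axis)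

lemma Tm_meas_gen: assumes "sets M = sets (borel::real measure)"
  shows "Tm \<in> measurable (PiM Basis (\<lambda>_. M)) borel"
  unfolding Tm_def
  apply (rule borel_measurable_sum)
  apply (rule borel_measurable_scaleR)
   apply (subst measurable_cong_sets[OF refl assms[symmetric]])
   apply (rule measurable_component_singleton, assumption)
  apply simp
  done

lemma Tm_meas: "Tm \<in> measurable (PiM Basis (\<lambda>_. lborel)) borel"
   "Tm \<in> measurable (PiM Basis (\<lambda>_. NN)) borel" "Tm \<in> measurable MM borel"
  by (auto intro!: Tm_meas_gen simp: MM_def)

lemma std_gauss3_eq: "std_gauss3 = distr MM borel Tm"
proof -
  have L: "(lborel :: (real^3) measure) = distr (PiM Basis (\<lambda>_. lborel)) borel Tm"
    unfolding Tm_def by (rule lborel_eq)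
  have "std_gauss3 = distr (density (PiM Basis (\<lambda>_. lborel)) (\<lambda>x. ennreal (\<Prod>i\<in>UNIV. std_normal_density (Tm x $ i)))) borel Tm"
    unfolding std_gauss3_def L by (rule density_distr[OF _ Tm_meas(1)]) measurable
  also have "density (PiM Basis (\<lambda>_. lborel)) (\<lambda>x. ennreal (\<Prod>i\<in>UNIV. std_normal_density (Tm x $ i)))
     = density (PiM Basis (\<lambda>_. lborel)) (\<lambda>x. \<Prod>b\<in>Basis. ennreal (std_normal_density (x b)))"
    by (rule density_cong) (auto simp: Tm_comp prod_Basis3 prod_ennreal)
  also have "\<dots> = MM" unfolding MM_def by (rule PiM_density_NN) simp
  finally show ?thesis .
qed

lemma prob_MM: "prob_space MM"
  unfolding MM_def by (rule prob_space_PiM) (rule prob_NN)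

lemma indep_MM: "prob_space.indep_vars MM (\<lambda>_. borel) (\<lambda>b f. f b) Basis"
proof -
  interpret prob_space MM by (rule prob_MM)
  have c: "distr MM borel (\<lambda>f. f b) = NN" if "b \<in> Basis" for b
  proof -
    have "distr MM borel (\<lambda>f. f b) = distr MM NN (\<lambda>f. f b)"
      by (rule distr_cong) auto
    also have "\<dots> = NN" unfolding MM_def
      by (rule distr_PiM_component) (auto simp: prob_NN that)
    finally show ?thesis .
  qed
  have d: "distr MM (PiM Basis (\<lambda>_. borel)) (\<lambda>x. \<lambda>b\<in>Basis. x b) = MM"
  proof -
    have sPi: "sets (PiM Basis (\<lambda>_. borel)) = sets MM" unfolding MM_def by (rule sets_PiM_cong) simp_all
    have "distr MM (PiM Basis (\<lambda>_. borel)) (\<lambda>x. \<lambda>b\<in>Basis. x b) = distr MM MM (\<lambda>x. x)"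
      by (rule distr_cong[OF refl sPi]) (auto simp: MM_def space_PiM PiE_def extensional_restrict)
    then show ?thesis by simp
  qed
  show ?thesis
    apply (subst indep_vars_iff_distr_eq_PiM')
    apply (simp add: Basis3)
    apply (simp add: MM_def)
    apply (simp add: d c cong: PiM_cong)
    apply (simp add: MM_def)
    done
qed

lemma distr_MM_comp: "b \<in> Basis \<Longrightarrow> distributed MM lborel (\<lambda>f. f b) std_normal_density"
proof -
  assume b: "b \<in> Basis"
  have "distr MM lborel (\<lambda>f. f b) = distr MM NN (\<lambda>f. f b)"
    by (rule distr_cong) auto
  also have "\<dots> = NN" unfolding MM_def
    by (rule distr_PiM_component) (auto simp: prob_NN b)
  finally show ?thesis
    unfolding distributed_def using b by (auto simp: NN_def MM_def)
qed

lemma MM_lin: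
  assumes w: "w \<noteq> (0::real^3)"
  shows "distributed MM lborel (\<lambda>x. (w \<bullet> Tm x) / norm w) std_normal_density"
proof -
  interpret prob_space MM by (rule prob_MM)
  define I where "I = {b\<in>(Basis::(real^3) set). w \<bullet> b \<noteq> 0}"
  have I2: "I \<subseteq> Basis" unfolding I_def by blast
  have I: "finite I" "I \<subseteq> Basis" using finite_subset[OF I2 finite_Basis] I2 by simp_all
  have Ine: "I \<noteq> {}"
  proof
    assume "I = {}"
    then have "\<forall>b\<in>Basis. w \<bullet> b = 0" unfolding I_def by blast
    then have "w = 0" using euclidean_all_zero_iff by blast
    with w show False by simp
  qed
  define X where "X = (\<lambda>b x. (w \<bullet> b) * (x b :: real))"
  have Xd: "distributed MM lborel (X b) (normal_density 0 \<bar>w \<bullet> b\<bar>)" if "b \<in> I" for b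
  proof -
    have "distributed MM lborel (\<lambda>x. 0 + (w \<bullet> b) * x b) (normal_density (0 + (w \<bullet> b) * 0) (\<bar>w \<bullet> b\<bar> * 1))"
      by (rule normal_density_affine[OF distr_MM_comp]) (use that I_def in auto)
    then show ?thesis by (simp add: X_def)
  qed
  have ind: "indep_vars (\<lambda>_. borel) X I"
    unfolding X_def
    by (rule indep_vars_compose2[where X="\<lambda>b f. f b", OF indep_vars_subset[OF indep_MM I(2)]]) auto
  have "distributed MM lborel (\<lambda>x. \<Sum>b\<in>I. X b x) (normal_density (\<Sum>b\<in>I. 0) (sqrt (\<Sum>b\<in>I. \<bar>w \<bullet> b\<bar>\<^sup>2)))"
    by (rule sum_indep_normal[OF I(1) Ine ind]) (use Xd I_def in auto)
  moreover have "(\<lambda>x. \<Sum>b\<in>I. X b x) = (\<lambda>x. w \<bullet> Tm x)"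
  proof
    fix x
    have "w \<bullet> Tm x = (\<Sum>b\<in>Basis. (w \<bullet> b) * (Tm x \<bullet> b))" by (rule euclidean_inner)
    also have "\<dots> = (\<Sum>b\<in>Basis. X b x)" by (intro sum.cong) (auto simp: Tm_inner X_def)
    also have "\<dots> = (\<Sum>b\<in>I. X b x)"
      by (rule sum.mono_neutral_right) (auto simp: I_def X_def)
    finally show "(\<Sum>b\<in>I. X b x) = w \<bullet> Tm x" ..
  qed
  moreover have "sqrt (\<Sum>b\<in>I. \<bar>w \<bullet> b\<bar>\<^sup>2) = norm w"
  proof -
    have "norm w = sqrt (\<Sum>b\<in>Basis. (w \<bullet> b) * (w \<bullet> b))"
      by (simp add: norm_eq_sqrt_inner euclidean_inner[of w w])
    also have "(\<Sum>b\<in>Basis. (w \<bullet> b) * (w \<bullet> b)) = (\<Sum>b\<in>I. (w \<bullet> b) * (w \<bullet> b))"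
      by (rule sum.mono_neutral_right) (auto simp: I_def)
    also have "\<dots> = (\<Sum>b\<in>I. \<bar>w \<bullet> b\<bar>\<^sup>2)"
      by (simp add: power2_eq_square[symmetric])
    finally show ?thesis ..
  qed
  ultimately have "distributed MM lborel (\<lambda>x. w \<bullet> Tm x) (normal_density 0 (norm w))"
    by simp
  then show ?thesis
    using normal_standard_normal_convert[of "norm w" "\<lambda>x. w \<bullet> Tm x" 0] w by simp
qed

lemma prob_std: "prob_space std_gauss3"
  unfolding std_gauss3_eq by (rule prob_space.prob_space_distr[OF prob_MM Tm_meas(3)])

lemma halfspace:
  assumes w: "w \<noteq> (0::real^3)" and A: "A \<in> sets borel"
  shows "measure std_gauss3 ((\<lambda>z. (w \<bullet> z) / norm w) -` A) = measure NN A"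
proof -
  have mA: "(\<lambda>z. (w \<bullet> z) / norm w) -` A \<in> sets borel"
    using measurable_sets[of "\<lambda>z::real^3. (w \<bullet> z) / norm w" borel borel A] A by simp
  have "measure std_gauss3 ((\<lambda>z. (w \<bullet> z) / norm w) -` A)
     = measure MM (Tm -` ((\<lambda>z. (w \<bullet> z) / norm w) -` A) \<inter> space MM)"
    unfolding std_gauss3_eq by (rule measure_distr[OF Tm_meas(3) mA])
  also have "\<dots> = measure MM ((\<lambda>x. (w \<bullet> Tm x) / norm w) -` A \<inter> space MM)"
    by (simp add: vimage_def)
  also have "\<dots> = measure (distr MM lborel (\<lambda>x. (w \<bullet> Tm x) / norm w)) A"
    using A by (subst measure_distr) (use distributed_measurable[OF MM_lin[OF w]] in auto)
  also have "\<dots> = measure NN A"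
    by (simp add: distributed_distr_eq_density[OF MM_lin[OF w]] NN_def)
  finally show ?thesis .
qed

lemma sym_dot:
  fixes S :: "real^'n^'n"
  assumes "transpose S = S" shows "x \<bullet> (S *v y) = (S *v x) \<bullet> y"
proof -
  have "x \<bullet> (S *v y) = (x v* S) \<bullet> y" by (simp add: dot_lmul_matrix)
  also have "x v* S = S *v x" by (metis assms vector_transpose_matrix)
  finally show ?thesis .
qed

lemma psd_zero:
  fixes S :: "real^'n^'n"
  assumes sym: "transpose S = S" and psd: "\<forall>x. 0 \<le> x \<bullet> (S *v x)" and z: "x \<bullet> (S *v x) = 0"
  shows "S *v x = 0"
proof (rule ccontr)
  define y where "y = S *v x"
  assume "S *v x \<noteq> 0"
  then have yp: "0 < y \<bullet> y" using y_def by simp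
  define c where "c = y \<bullet> (S *v y)"
  have c0: "0 \<le> c" using psd c_def by simp
  define t where "t = (y \<bullet> y) / (c + 1)"
  have tp: "0 < t" using yp c0 t_def by simp
  have e1: "y \<bullet> (S *v x) = y \<bullet> y" by (simp add: y_def)
  have e2: "x \<bullet> (S *v y) = y \<bullet> y" by (simp add: sym_dot[OF sym] y_def)
  have "0 \<le> (x - t *\<^sub>R y) \<bullet> (S *v (x - t *\<^sub>R y))" using psd by blast
  also have "\<dots> = x \<bullet> (S *v x) - t * (y \<bullet> (S *v x)) - t * (x \<bullet> (S *v y)) + t * t * c"
    by (simp add: matrix_vector_mult_diff_distrib matrix_vector_mult_scaleR inner_diff_left
        inner_diff_right c_def algebra_simps)
  also have "\<dots> = t * (t * c - 2 * (y \<bullet> y))" using z e1 e2 by (simp add: algebra_simps)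
  also have "\<dots> < 0"
  proof -
    have "t * c = (y \<bullet> y) * (c / (c + 1))" using t_def by simp
    also have "\<dots> < (y \<bullet> y) * 2"
      using yp c0 by (intro mult_strict_left_mono) (auto simp: field_simps)
    finally show ?thesis using tp by (simp add: mult_neg_pos mult_pos_neg)
  qed
  finally show False by simp
qed

lemma kernel_one:
  fixes S :: "real^3^3"
  assumes sym: "transpose S = S" and one: "S *v 1 = 0" and rk: "rank S = 2"
    and v: "S *v v = 0" and v1: "v \<bullet> 1 = 0"
  shows "v = 0"
proof (rule ccontr)
  assume vnz: "v \<noteq> 0"
  define u :: "real^3" where "u = (\<chi> i. if i = 1 then v$3 - v$2 else if i = 2 then v$1 - v$3 else v$2 - v$1)"
  have u1: "u \<bullet> 1 = 0" by (simp add: u_def inner_vec_def sum_3)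
  have uv: "u \<bullet> v = 0" by (simp add: u_def inner_vec_def sum_3 algebra_simps)
  have v1': "v$1 + v$2 + v$3 = 0" using v1 by (simp add: inner_vec_def sum_3)
  have unz: "u \<noteq> 0"
  proof
    assume "u = 0"
    then have "v$3 = v$2" "v$1 = v$3" 
      by (auto simp: u_def vec_eq_iff dest: spec[of _ 1] spec[of _ 2])
    with v1' have "v$1 = 0" "v$2 = 0" "v$3 = 0" by auto
    then have "v = 0" by (simp add: vec_eq_iff forall_3)
    with vnz show False by simp
  qed
  have one_nz: "(1::real^3) \<noteq> 0" by (simp add: vec_eq_iff)
  let ?B = "{1, v, u} :: (real^3) set"
  have orth: "pairwise orthogonal ?B"
    using u1 uv v1 by (auto simp: pairwise_def orthogonal_def inner_commute)
  have ind: "independent ?B"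
    by (rule pairwise_orthogonal_independent[OF orth]) (use one_nz vnz unz in auto)
  have d1: "(1::real^3) \<noteq> v" using v1 one_nz by (auto simp: inner_vec_def sum_3)
  have d2: "(1::real^3) \<noteq> u" using u1 one_nz by (auto simp: inner_vec_def sum_3)
  have d3: "v \<noteq> u" using uv vnz by auto
  have card: "card ?B = 3" using d1 d2 d3 by simp
  have span: "UNIV \<subseteq> span ?B"
    by (rule card_ge_dim_independent[OF _ ind]) (simp_all add: card)
  have "rank S = dim (range (\<lambda>x. S *v x))" by (rule rank_dim_range)
  also have "range (\<lambda>x. S *v x) = (\<lambda>x. S *v x) ` span ?B" using span by auto
  also have "\<dots> = span ((\<lambda>x. S *v x) ` ?B)"
    by (rule span_linear_image[OF matrix_vector_mul_linear, symmetric])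
  also have "(\<lambda>x. S *v x) ` ?B = {0, S *v u}" using one v by auto
  also have "dim (span {0, S *v u}) \<le> 1"
    using dim_le_card[of "{S *v u}" "{S *v u}"] by (simp add: dim_insert)
  finally show False using rk by simp
qed


lemma neq_idx: "(1::2) \<noteq> 2" "(1::3) \<noteq> 2" "(1::3) \<noteq> 3" "(2::3) \<noteq> 3"
  by simp_all

lemma s6: "sqrt 6 = sqrt 2 * sqrt 3"
  by (simp add: real_sqrt_mult[symmetric])

lemma sqq: "sqrt 2 * (sqrt 2 * y) = 2*y" "sqrt 3 * (sqrt 3 * y) = 3*y" "sqrt 2 * sqrt 2 = 2" "sqrt 3 * sqrt 3 = 3"
  by (simp_all add: mult.assoc[symmetric])

lemma Pent: "Pmat $ 1 $ 1 = 1 / sqrt 6" "Pmat $ 1 $ 2 = 1 / sqrt 6" "Pmat $ 1 $ 3 = - 2 / sqrt 6"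
   "Pmat $ 2 $ 1 = 1 / sqrt 2" "Pmat $ 2 $ 2 = - 1 / sqrt 2" "Pmat $ 2 $ 3 = 0"
  by (simp_all add: Pmat_def)

lemma cent: "cvec 1 $ 1 = 0" "cvec 1 $ 2 = 1" "cvec 2 $ 1 = sqrt 3 / 2" "cvec 2 $ 2 = - 1 / 2"
  "cvec 3 $ 1 = sqrt 3 / 2" "cvec 3 $ 2 = 1 / 2"
  by (simp_all add: cvec_def)

lemma PPt: "Pmat ** transpose Pmat = mat 1"
  by (simp add: vec_eq_iff forall_2 matrix_matrix_mult_def transpose_def mat_def sum_3 Pent sqq
     field_simps s6)

lemma PtP: "(transpose Pmat ** Pmat) *v x = x - ((x \<bullet> 1) / 3) *\<^sub>R 1"
  by (simp add: vec_eq_iff forall_3 matrix_matrix_mult_def matrix_vector_mult_def transpose_def sum_2 sum_3 Pent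
     inner_vec_def field_simps s6 sqq)

lemma P1: "Pmat *v 1 = 0"
  by (simp add: vec_eq_iff forall_2 matrix_vector_mult_def sum_3 Pent)

lemma gdot: "(transpose Pmat *v cvec 1) \<bullet> x = (x$1 - x$2) / sqrt 2"
  "(transpose Pmat *v cvec 2) \<bullet> x = (x$2 - x$3) / sqrt 2"
  "(transpose Pmat *v cvec 3) \<bullet> x = (x$1 - x$3) / sqrt 2"
  by (simp_all add: inner_vec_def matrix_vector_mult_def transpose_def sum_2 sum_3 Pent cent
     field_simps s6 sqq)


lemma normD: assumes "normalized \<mu> S"
  shows "transpose S = S" "\<forall>x. 0 \<le> x \<bullet> (S *v x)" "S *v 1 = 0" "rank S = 2"
  using assms by (auto simp: normalized_def)

lemma pos_def1:
  assumes N: "normalized \<mu> S" and v1: "v \<bullet> 1 = 0" and vnz: "v \<noteq> 0"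
  shows "0 < v \<bullet> (S *v v)"
proof -
  have "0 \<le> v \<bullet> (S *v v)" using normD(2)[OF N] by blast
  moreover have "v \<bullet> (S *v v) \<noteq> 0"
  proof
    assume "v \<bullet> (S *v v) = 0"
    then have "S *v v = 0" by (rule psd_zero[OF normD(1)[OF N] normD(2)[OF N]])
    then have "v = 0" by (rule kernel_one[OF normD(1)[OF N] normD(3)[OF N] normD(4)[OF N] _ v1])
    with vnz show False by simp
  qed
  ultimately show ?thesis by simp
qed

lemma QSQ: assumes N: "normalized \<mu> S"
  shows "transpose Pmat ** Pmat ** S ** (transpose Pmat ** Pmat) = S"
proof -
  have S1: "(S *v x) \<bullet> 1 = 0" for x
    using sym_dot[OF normD(1)[OF N], of x 1] normD(3)[OF N] by simp
  show ?thesis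
  proof (subst matrix_eq, intro allI)
    fix x
    have "(transpose Pmat ** Pmat ** S ** (transpose Pmat ** Pmat)) *v x
        = (transpose Pmat ** Pmat) *v (S *v ((transpose Pmat ** Pmat) *v x))"
      by (simp only: matrix_vector_mul_assoc matrix_mul_assoc)
    also have "S *v ((transpose Pmat ** Pmat) *v x) = S *v x"
      by (simp add: PtP matrix_vector_mult_diff_distrib matrix_vector_mult_scaleR normD(3)[OF N])
    also have "(transpose Pmat ** Pmat) *v (S *v x) = S *v x"
      by (simp add: PtP S1)
    finally show "(transpose Pmat ** Pmat ** S ** (transpose Pmat ** Pmat)) *v x = S *v x" .
  qed
qed

lemma Sd_sym: assumes N: "normalized \<mu> S"
  shows "transpose (Pmat ** S ** transpose Pmat) = Pmat ** S ** transpose Pmat"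
  by (simp add: matrix_transpose_mul normD(1)[OF N] matrix_mul_assoc)

lemma Sd_pos: assumes N: "normalized \<mu> S" and x: "x \<noteq> 0"
  shows "0 < x \<bullet> ((Pmat ** S ** transpose Pmat) *v x)"
proof -
  define v where "v = transpose Pmat *v x"
  have "x \<bullet> ((Pmat ** S ** transpose Pmat) *v x) = x \<bullet> (Pmat *v (S *v v))"
    by (simp only: v_def matrix_vector_mul_assoc matrix_mul_assoc)
  also have "\<dots> = v \<bullet> (S *v v)" by (simp add: v_def dot_lmul_matrix)
  finally have e: "x \<bullet> ((Pmat ** S ** transpose Pmat) *v x) = v \<bullet> (S *v v)" .
  have v1: "v \<bullet> 1 = 0" by (simp add: v_def dot_lmul_matrix P1)
  have "Pmat *v v = x" by (simp only: v_def matrix_vector_mul_assoc PPt matrix_vector_mul_lid)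
  then have "v \<noteq> 0" using x by auto
  then show ?thesis using e pos_def1[OF N v1] by simp
qed

lemma chol2:
  fixes D :: "real^2^2"
  assumes sym: "transpose D = D" and pd: "\<And>x. x \<noteq> 0 \<Longrightarrow> 0 < x \<bullet> (D *v x)"
  shows "(\<exists>L::real^2^2. L ** transpose L = D) \<and> (\<exists>W::real^2^2. W ** D ** transpose W = mat 1)"
proof -
  define p where "p = D$1$1"
  define q where "q = D$1$2"
  define r where "r = D$2$2"
  have q': "D$2$1 = q"
    using arg_cong[OF sym, of "\<lambda>M. M$1$2"] by (simp add: transpose_def q_def)
  have "axis 1 1 \<noteq> (0::real^2)" by (simp add: axis_def vec_eq_iff)
  from pd[OF this] have pp: "0 < p"
    by (simp add: p_def inner_vec_def matrix_vector_mult_def axis_def sum_2)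
  define x :: "real^2" where "x = (\<chi> i. if i = 1 then q else -p)"
  have "x \<noteq> 0" using pp by (auto simp: x_def vec_eq_iff dest: spec[of _ 2])
  from pd[OF this] have "0 < p * (p * r - q * q)"
    by (simp add: x_def inner_vec_def matrix_vector_mult_def sum_2 q' p_def[symmetric] r_def[symmetric]
        q_def[symmetric] algebra_simps)
  then have det: "0 < p * r - q * q" using pp by (simp add: zero_less_mult_iff)
  define s where "s = sqrt p"
  define u where "u = sqrt (r - q*q/p)"
  have rq: "0 < r - q*q/p" using det pp by (simp add: field_simps)
  have s: "0 < s" "s * s = p" using pp by (simp_all add: s_def)
  have u: "0 < u" "u * u = r - q*q/p" using rq by (simp_all add: u_def)
  have Dent: "D$1$1 = p" "D$1$2 = q" "D$2$1 = q" "D$2$2 = r" by (simp_all add: p_def q_def r_def q')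
  define L :: "real^2^2" where "L = (\<chi> i j. if i = 1 then (if j = 1 then s else 0) else (if j = 1 then q/s else u))"
  define W :: "real^2^2" where "W = (\<chi> i j. if i = 1 then (if j = 1 then 1/s else 0) else (if j = 1 then -q/(p*u) else 1/u))"
  have "L ** transpose L = D"
  proof -
    have a: "q * q / p + u * u = r" using u by simp
    have a2: "q / s * (q / s) = q * q / p" using s by (simp add: field_simps)
    have sn: "s \<noteq> 0" using s(1) by simp
    show ?thesis
      by (simp add: vec_eq_iff forall_2 matrix_matrix_mult_def transpose_def sum_2 L_def Dent s a a2 sn)
  qed
  moreover have "W ** D ** transpose W = mat 1"
  proof -
    have a: "1 / s * (p * (1 / s)) = 1" using s pp by (simp add: field_simps)
    have b: "(- q / (p * u)) * (p * (- q / (p * u))) + (- q / (p * u)) * (q * (1 / u))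
        + (1 / u) * (q * (- q / (p * u))) + (1/u) * (r * (1/u)) = 1"
    proof -
      have "(- q / (p * u)) * (p * (- q / (p * u))) + (- q / (p * u)) * (q * (1 / u))
        + (1 / u) * (q * (- q / (p * u))) + (1/u) * (r * (1/u)) = (r - q*q/p) / (u * u)"
        using s u pp by (simp add: field_simps)
      also have "\<dots> = 1" unfolding u(2)[symmetric] using u(1) by simp
      finally show ?thesis .
    qed
    have c: "1 / s * (p * (- q / (p * u))) + 1 / s * (q * (1 / u)) = 0"
      using s u pp by (simp add: field_simps)
    have c': "(- q / (p * u)) * (p * (1 / s)) + (1 / u) * (q * (1 / s)) = 0"
      using s u pp by (simp add: field_simps)
    have sn: "s \<noteq> 0" "u \<noteq> 0" using s(1) u(1) by simp_all
    have p_eq: "p = s * s" using s by simp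
    have r_eq: "r = u * u + q * q / (s * s)" using u s by simp
    show ?thesis using sn
      by (simp add: vec_eq_iff forall_2 matrix_matrix_mult_def transpose_def sum_2 W_def Dent mat_def
          p_eq r_eq field_simps)
  qed
  ultimately show ?thesis by blast
qed

lemma A_W_exists: assumes N: "normalized \<mu> S"
  shows "(\<exists>A::real^3^3. A ** transpose A = S) \<and> (\<exists>W::real^2^2. W ** (Pmat ** S ** transpose Pmat) ** transpose W = mat 1)"
proof -
  have ch: "(\<exists>L::real^2^2. L ** transpose L = Pmat ** S ** transpose Pmat) \<and>
      (\<exists>W::real^2^2. W ** (Pmat ** S ** transpose Pmat) ** transpose W = mat 1)"
    by (rule chol2[OF Sd_sym[OF N] Sd_pos[OF N]])
  then obtain L :: "real^2^2" where L: "L ** transpose L = Pmat ** S ** transpose Pmat" by blast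
  define E :: "real^3^2" where "E = (\<chi> i j. if (i = 1 \<and> j = 1) \<or> (i = 2 \<and> j = 2) then 1 else 0)"
  have EE: "E ** transpose E = mat 1"
    by (simp add: vec_eq_iff forall_2 matrix_matrix_mult_def transpose_def sum_3 E_def mat_def)
  define A where "A = transpose Pmat ** L ** E"
  have "A ** transpose A = transpose Pmat ** (L ** (E ** transpose E) ** transpose L) ** Pmat"
    by (simp add: A_def matrix_transpose_mul matrix_mul_assoc)
  also have "\<dots> = transpose Pmat ** (Pmat ** S ** transpose Pmat) ** Pmat"
    by (simp add: EE L)
  also have "\<dots> = S" using QSQ[OF N] by (simp add: matrix_mul_assoc)
  finally show ?thesis using ch by blast
qed

lemma alpha_formula:
  assumes Wex: "\<exists>W::real^2^2. W ** (Pmat ** S ** transpose Pmat) ** transpose W = mat 1"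
  shows "alpha \<mu> S i = ((transpose Pmat *v cvec i) \<bullet> \<mu>) /
      sqrt ((transpose Pmat *v cvec i) \<bullet> (S *v (transpose Pmat *v cvec i)))"
proof -
  define Sd where "Sd = Pmat ** S ** transpose Pmat"
  define W where "W = (SOME W :: real^2^2. W ** Sd ** transpose W = mat 1)"
  have WW: "W ** Sd ** transpose W = mat 1" unfolding W_def
    by (rule someI_ex) (use Wex Sd_def in simp)
  define V0 where "V0 = Sd ** transpose W"
  have WV0: "W ** V0 = mat 1" using WW by (simp add: V0_def matrix_mul_assoc)
  have V0W: "V0 ** W = mat 1" using WV0 matrix_left_right_inverse by blast
  define V where "V = matrix_inv W"
  have WV: "W ** V = mat 1 \<and> V ** W = mat 1" unfolding V_def matrix_inv_def
    by (rule someI[of _ V0]) (use WV0 V0W in simp)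
  have VV: "V ** transpose V = Sd"
  proof -
    have "Sd = (V ** W) ** Sd ** transpose (V ** W)" using WV by simp
    also have "\<dots> = V ** (W ** Sd ** transpose W) ** transpose V"
      by (simp add: matrix_transpose_mul matrix_mul_assoc)
    also have "\<dots> = V ** transpose V" using WW by simp
    finally show ?thesis ..
  qed
  define c where "c = cvec i"
  define g where "g = transpose Pmat *v c"
  define h where "h = transpose V *v c"
  have hW: "h \<bullet> (W *v y) = c \<bullet> y" for y
  proof -
    have "h \<bullet> (W *v y) = c \<bullet> (V *v (W *v y))" by (simp add: h_def dot_lmul_matrix)
    also have "V *v (W *v y) = y" using WV by (simp add: matrix_vector_mul_assoc)
    finally show ?thesis .
  qed
  have hh: "h \<bullet> h = g \<bullet> (S *v g)"
  proof -
    have "h \<bullet> h = c \<bullet> (V *v (transpose V *v c))" by (simp add: h_def dot_lmul_matrix)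
    also have "V *v (transpose V *v c) = Sd *v c" by (simp only: matrix_vector_mul_assoc VV)
    also have "Sd *v c = Pmat *v (S *v g)"
      by (simp only: Sd_def g_def matrix_vector_mul_assoc matrix_mul_assoc)
    also have "c \<bullet> (Pmat *v (S *v g)) = g \<bullet> (S *v g)" by (simp add: g_def dot_lmul_matrix)
    finally show ?thesis .
  qed
  have "alpha \<mu> S i = ((1 / norm h) *\<^sub>R h) \<bullet> (W *v (Pmat *v \<mu>))"
    unfolding alpha_def Let_def
    unfolding Sd_def[symmetric]
    unfolding W_def[symmetric] V_def[symmetric] c_def[symmetric] h_def[symmetric] ..
  also have "\<dots> = (c \<bullet> (Pmat *v \<mu>)) / norm h" by (simp add: hW)
  also have "c \<bullet> (Pmat *v \<mu>) = g \<bullet> \<mu>" by (simp add: g_def dot_lmul_matrix)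
  also have "norm h = sqrt (g \<bullet> (S *v g))" by (simp add: norm_eq_sqrt_inner hh)
  finally show ?thesis by (simp add: g_def c_def)
qed

lemma alpha_eq: assumes N: "normalized \<mu> S"
  shows "alpha \<mu> S i = ((transpose Pmat *v cvec i) \<bullet> \<mu>) /
      sqrt ((transpose Pmat *v cvec i) \<bullet> (S *v (transpose Pmat *v cvec i)))"
  using alpha_formula A_W_exists[OF N] by blast


lemma borel_le3: "{x::real^3. x$b \<le> x$a} \<in> sets borel"
  by (rule borel_closed) (simp add: closed_Collect_le continuous_on_component)

lemma borel_eq3: "{x::real^3. x$a = x$b} \<in> sets borel"
  by (rule borel_closed) (simp add: closed_Collect_eq continuous_on_component)

lemma split3:
  fixes M :: "(real^3) measure"
  assumes P: "prob_space M" and sM: "sets M = sets borel"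
    and z1: "measure M {x. x$b = x$c} = 0" and z2: "measure M {x. x$a = x$c} = 0"
  shows "measure M {x. x$b \<le> x$a} = measure M {x. x$a \<ge> x$b \<and> x$b \<ge> x$c}
     + measure M {x. x$a \<ge> x$c \<and> x$c \<ge> x$b} + measure M {x. x$c \<ge> x$a \<and> x$a \<ge> x$b}"
proof -
  interpret prob_space M by (rule P)
  define E1 where "E1 = {x::real^3. x$a \<ge> x$b \<and> x$b \<ge> x$c}"
  define E2 where "E2 = {x::real^3. x$a \<ge> x$c \<and> x$c \<ge> x$b}"
  define E3 where "E3 = {x::real^3. x$c \<ge> x$a \<and> x$a \<ge> x$b}"
  have E1s: "E1 = {x. x$b \<le> x$a} \<inter> {x. x$c \<le> x$b}" by (auto simp: E1_def)
  have E2s: "E2 = {x. x$c \<le> x$a} \<inter> {x. x$b \<le> x$c}" by (auto simp: E2_def)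
  have E3s: "E3 = {x. x$a \<le> x$c} \<inter> {x. x$b \<le> x$a}" by (auto simp: E3_def)
  have m: "E1 \<in> sets M" "E2 \<in> sets M" "E3 \<in> sets M"
    unfolding sM E1s E2s E3s by (auto intro!: borel_le3)
  have mz: "{x::real^3. x$b = x$c} \<in> sets M" "{x::real^3. x$a = x$c} \<in> sets M"
    unfolding sM by (auto intro!: borel_eq3)
  have U: "{x. x$b \<le> x$a} = (E1 \<union> E2) \<union> E3" by (auto simp: E1_def E2_def E3_def)
  have i12: "measure M (E1 \<inter> E2) = 0"
  proof -
    have "measure M (E1 \<inter> E2) \<le> measure M {x. x$b = x$c}"
      by (rule finite_measure_mono) (auto simp: E1_def E2_def mz)
    then show ?thesis using z1 measure_nonneg[of M "E1 \<inter> E2"] by simp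
  qed
  have i3: "measure M ((E1 \<union> E2) \<inter> E3) = 0"
  proof -
    have "measure M ((E1 \<union> E2) \<inter> E3) \<le> measure M {x. x$a = x$c}"
      by (rule finite_measure_mono) (auto simp: E1_def E2_def E3_def mz)
    then show ?thesis using z2 measure_nonneg[of M "(E1 \<union> E2) \<inter> E3"] by simp
  qed
  have "measure M {x. x$b \<le> x$a} = measure M (E1 \<union> E2) + measure M E3 - measure M ((E1 \<union> E2) \<inter> E3)"
    unfolding U by (rule measure_Un3) (use m in \<open>simp_all add: fmeasurable_eq_sets sets.Un\<close>)
  also have "measure M (E1 \<union> E2) = measure M E1 + measure M E2 - measure M (E1 \<inter> E2)"
    by (rule measure_Un3) (use m in \<open>simp_all add: fmeasurable_eq_sets sets.Un\<close>)
  finally have "measure M {x. x$b \<le> x$a} = measure M E1 + measure M E2 + measure M E3"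
    using i12 i3 by linarith
  then show ?thesis unfolding E1_def E2_def E3_def .
qed

lemma NN_single: "measure NN {t} = 0"
proof -
  have "AE x in lborel. x \<in> {t} \<longrightarrow> std_normal_density x = 0"
    using AE_lborel_singleton[of t] by eventually_elim auto
  then have "{t} \<in> null_sets NN" unfolding NN_def
    by (subst null_sets_density_iff) auto
  then show ?thesis by (rule measure_eq_0_null_sets)
qed

lemma NN_mono: assumes st: "s < t" shows "measure NN {t..} < measure NN {s..}"
proof -
  interpret prob_space NN by (rule prob_NN)
  have pos: "measure NN {s..<t} \<noteq> 0"
  proof
    assume "measure NN {s..<t} = 0"
    then have "emeasure NN {s..<t} = 0" by (simp add: emeasure_eq_measure)
    then have "{s..<t} \<in> null_sets NN" by (auto simp: null_sets_def)
    then have "AE x in lborel. x \<in> {s..<t} \<longrightarrow> std_normal_density x = 0"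
      unfolding NN_def by (subst (asm) null_sets_density_iff) auto
    then have "AE x in lborel. x \<notin> {s<..<t}"
    proof eventually_elim
      case (elim x)
      have "0 < std_normal_density x" by (rule normal_density_pos) simp
      with elim show ?case by auto
    qed
    then have "emeasure lborel {s<..<t} = 0"
      by (subst (asm) AE_iff_measurable[of "{s<..<t}"]) auto
    then show False using st by simp
  qed
  have "measure NN {s..} = measure NN ({s..<t} \<union> {t..})"
    using st by (intro arg_cong[where f="measure NN"]) auto
  also have "\<dots> = measure NN {s..<t} + measure NN {t..}"
    by (rule finite_measure_Union) auto
  moreover have "0 \<le> measure NN {s..<t}" by (rule measure_nonneg)
  ultimately show ?thesis using pos by linarith
qed

lemma NN_inj: assumes "measure NN {s..} = measure NN {t..}" shows "s = t"
  using NN_mono[of s t] NN_mono[of t s] assms by (cases s t rule: linorder_cases) auto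

lemma gauss3_A: assumes N: "normalized \<mu> S"
  shows "\<exists>A. A ** transpose A = S \<and> gauss3 \<mu> S = distr std_gauss3 borel (\<lambda>z. \<mu> + A *v z)"
proof -
  define A where "A = (SOME A :: real^3^3. A ** transpose A = S)"
  have "A ** transpose A = S" unfolding A_def by (rule someI_ex) (use A_W_exists[OF N] in blast)
  then show ?thesis by (auto simp: gauss3_def A_def)
qed

lemma lin_meas: "(\<lambda>z. \<mu> + A *v z) \<in> borel_measurable (borel :: (real^3) measure)"
  for \<mu> :: "real^3" and A :: "real^3^3"
  by (intro borel_measurable_continuous_onI continuous_on_add continuous_on_const linear_continuous_on
      matrix_vector_mul_bounded_linear)

lemma prob_gauss3: assumes N: "normalized \<mu> S" shows "prob_space (gauss3 \<mu> S)"
proof -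
  obtain A where "gauss3 \<mu> S = distr std_gauss3 borel (\<lambda>z. \<mu> + A *v z)" using gauss3_A[OF N] by blast
  moreover have sg: "sets std_gauss3 = sets borel" by (simp add: std_gauss3_def)
  moreover have "(\<lambda>z. \<mu> + A *v z) \<in> measurable std_gauss3 borel"
    unfolding measurable_cong_sets[OF sg refl] by (rule lin_meas)
  ultimately show ?thesis using prob_space.prob_space_distr[OF prob_std] by metis
qed

lemma sets_gauss3: "sets (gauss3 \<mu> S) = sets borel" by (simp add: gauss3_def)

lemma pw:
  assumes N: "normalized \<mu> S" and d1: "d \<bullet> 1 = 0" and dnz: "d \<noteq> 0"
  shows "measure (gauss3 \<mu> S) {x. 0 \<le> d \<bullet> x} = measure NN {-(d \<bullet> \<mu>) / sqrt (d \<bullet> (S *v d))..}"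
    and "measure (gauss3 \<mu> S) {x. d \<bullet> x = 0} = 0"
proof -
  obtain A where AA: "A ** transpose A = S" and G: "gauss3 \<mu> S = distr std_gauss3 borel (\<lambda>z. \<mu> + A *v z)"
    using gauss3_A[OF N] by blast
  define w where "w = transpose A *v d"
  have "w \<bullet> w = d \<bullet> (A *v w)" by (simp add: w_def dot_lmul_matrix)
  also have "A *v w = S *v d" unfolding w_def matrix_vector_mul_assoc AA ..
  finally have ww: "w \<bullet> w = d \<bullet> (S *v d)" .
  have pos: "0 < d \<bullet> (S *v d)" by (rule pos_def1[OF N d1 dnz])
  have nw: "norm w = sqrt (d \<bullet> (S *v d))" by (simp add: norm_eq_sqrt_inner ww)
  have nwp: "0 < norm w" using nw pos by simp
  then have wnz: "w \<noteq> 0" by auto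
  have dF: "d \<bullet> (\<mu> + A *v z) = d \<bullet> \<mu> + w \<bullet> z" for z
    by (simp add: w_def inner_add_right dot_lmul_matrix)
  have sp: "space std_gauss3 = UNIV" by (simp add: std_gauss3_def)
  have sg: "sets std_gauss3 = sets borel" by (simp add: std_gauss3_def)
  have lm: "(\<lambda>z. \<mu> + A *v z) \<in> measurable std_gauss3 borel"
    unfolding measurable_cong_sets[OF sg refl] by (rule lin_meas)
  have meas: "measure (gauss3 \<mu> S) T = measure std_gauss3 ((\<lambda>z. \<mu> + A *v z) -` T)" if "T \<in> sets borel" for T
    unfolding G measure_distr[OF lm that] sp by simp
  have key1: "(-(d \<bullet> \<mu>) / norm w \<le> (w \<bullet> z) / norm w) = (0 \<le> d \<bullet> \<mu> + w \<bullet> z)" for z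
    by (subst divide_le_cancel) (use nwp in auto)
  have key2: "((w \<bullet> z) / norm w = -(d \<bullet> \<mu>) / norm w) = (d \<bullet> \<mu> + w \<bullet> z = 0)" for z
    by (subst divide_cancel_right) (use nwp in auto)
  have s1: "{x::real^3. 0 \<le> d \<bullet> x} \<in> sets borel"
    by (rule borel_closed) (intro closed_Collect_le continuous_intros)
  have s2: "{x::real^3. d \<bullet> x = 0} \<in> sets borel"
    by (rule borel_closed) (intro closed_Collect_eq continuous_intros)
  have "measure (gauss3 \<mu> S) {x. 0 \<le> d \<bullet> x} = measure std_gauss3 ((\<lambda>z. (w \<bullet> z) / norm w) -` {-(d \<bullet> \<mu>) / norm w..})"
    unfolding meas[OF s1]
    by (intro arg_cong[where f="measure std_gauss3"] set_eqI) (simp only: vimage_def mem_Collect_eq atLeast_iff dF key1)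
  also have "\<dots> = measure NN {-(d \<bullet> \<mu>) / norm w..}" by (rule halfspace[OF wnz]) simp
  finally show "measure (gauss3 \<mu> S) {x. 0 \<le> d \<bullet> x} = measure NN {-(d \<bullet> \<mu>) / sqrt (d \<bullet> (S *v d))..}"
    by (simp add: nw)
  have "measure (gauss3 \<mu> S) {x. d \<bullet> x = 0} = measure std_gauss3 ((\<lambda>z. (w \<bullet> z) / norm w) -` {-(d \<bullet> \<mu>) / norm w})"
    unfolding meas[OF s2]
    by (intro arg_cong[where f="measure std_gauss3"] set_eqI) (simp only: vimage_def mem_Collect_eq singleton_iff dF key2)
  also have "\<dots> = measure NN {-(d \<bullet> \<mu>) / norm w}" by (rule halfspace[OF wnz]) simp
  finally show "measure (gauss3 \<mu> S) {x. d \<bullet> x = 0} = 0" by (simp add: NN_single)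
qed

lemma tie0: assumes N: "normalized \<mu> S" and ab: "a \<noteq> b"
  shows "measure (gauss3 \<mu> S) {x. x$a = x$b} = 0"
proof -
  define d :: "real^3" where "d = axis a 1 - axis b 1"
  have dx: "d \<bullet> x = x$a - x$b" for x by (simp add: d_def inner_diff_left inner_axis')
  have d1: "d \<bullet> 1 = 0" by (simp add: dx)
  have "d \<bullet> axis a 1 = 1" using ab by (simp add: dx axis_def)
  then have dnz: "d \<noteq> 0" by auto
  have "{x::real^3. x$a = x$b} = {x. d \<bullet> x = 0}" by (auto simp: dx)
  then show ?thesis using pw(2)[OF N d1 dnz] by simp
qed

lemma pair_prob:
  assumes N: "normalized \<mu> S" and ab: "a \<noteq> b" "b \<noteq> c" "a \<noteq> c"
  shows "measure (gauss3 \<mu> S) {x. x$b \<le> x$a} = rank_prob \<mu> S a b c + rank_prob \<mu> S a c b + rank_prob \<mu> S c a b"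
  unfolding rank_prob_def
  by (rule split3[OF prob_gauss3[OF N] sets_gauss3 tie0[OF N] tie0[OF N]]) (use ab in auto)

lemma final_pair:
  assumes N: "normalized \<mu> S" and N': "normalized \<mu>' S'"
    and R: "\<And>a b c. a \<noteq> b \<Longrightarrow> b \<noteq> c \<Longrightarrow> a \<noteq> c \<Longrightarrow> rank_prob \<mu> S a b c = rank_prob \<mu>' S' a b c"
    and ab: "a \<noteq> b" "b \<noteq> c" "a \<noteq> c"
    and g: "\<And>x. g \<bullet> x = (x$a - x$b) / sqrt 2"
  shows "(g \<bullet> \<mu>) / sqrt (g \<bullet> (S *v g)) = (g \<bullet> \<mu>') / sqrt (g \<bullet> (S' *v g))"
proof -
  have g1: "g \<bullet> 1 = 0" by (simp add: g)
  have "g \<bullet> axis a 1 \<noteq> 0" using ab by (simp add: g axis_def)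
  then have gnz: "g \<noteq> 0" by auto
  have set: "{x::real^3. 0 \<le> g \<bullet> x} = {x. x$b \<le> x$a}" by (auto simp: g zero_le_divide_iff)
  have r1: "rank_prob \<mu> S a b c = rank_prob \<mu>' S' a b c" by (rule R) (use ab in auto)
  have r2: "rank_prob \<mu> S a c b = rank_prob \<mu>' S' a c b" by (rule R) (use ab in auto)
  have r3: "rank_prob \<mu> S c a b = rank_prob \<mu>' S' c a b" by (rule R) (use ab in auto)
  have "measure (gauss3 \<mu> S) {x. x$b \<le> x$a} = measure (gauss3 \<mu>' S') {x. x$b \<le> x$a}"
    unfolding pair_prob[OF N ab] pair_prob[OF N' ab] r1 r2 r3 ..
  then have "measure NN {-(g \<bullet> \<mu>) / sqrt (g \<bullet> (S *v g))..} = measure NN {-(g \<bullet> \<mu>') / sqrt (g \<bullet> (S' *v g))..}"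
    using pw(1)[OF N g1 gnz] pw(1)[OF N' g1 gnz] by (simp add: set)
  then have "-(g \<bullet> \<mu>) / sqrt (g \<bullet> (S *v g)) = -(g \<bullet> \<mu>') / sqrt (g \<bullet> (S' *v g))" by (rule NN_inj)
  then show ?thesis by simp
qed

theorem lemma1:
  fixes \<mu> \<mu>' :: "real^3" and \<Sigma> \<Sigma>' :: "real^3^3"
  assumes "normalized \<mu> \<Sigma>" and "normalized \<mu>' \<Sigma>'"
    and "\<And>a b c. a \<noteq> b \<Longrightarrow> b \<noteq> c \<Longrightarrow> a \<noteq> c \<Longrightarrow>
           rank_prob \<mu> \<Sigma> a b c = rank_prob \<mu>' \<Sigma>' a b c"
  shows "\<forall>i::3. alpha \<mu> \<Sigma> i = alpha \<mu>' \<Sigma>' i"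
proof
  fix i :: 3
  have "alpha \<mu> \<Sigma> i = alpha \<mu>' \<Sigma>' i" if "i = 1 \<or> i = 2 \<or> i = 3"
  proof -
    from that consider (i1) "i = 1" | (i2) "i = 2" | (i3) "i = 3" by blast
    then show ?thesis
    proof cases
      case i1
      show ?thesis unfolding alpha_eq[OF assms(1)] alpha_eq[OF assms(2)] i1
        by (rule final_pair[OF assms(1) assms(2) assms(3) _ _ _ gdot(1), where c=3]) simp_all
    next
      case i2
      show ?thesis unfolding alpha_eq[OF assms(1)] alpha_eq[OF assms(2)] i2
        by (rule final_pair[OF assms(1) assms(2) assms(3) _ _ _ gdot(2), where c=1]) simp_all
    next
      case i3
      show ?thesis unfolding alpha_eq[OF assms(1)] alpha_eq[OF assms(2)] i3
        by (rule final_pair[OF assms(1) assms(2) assms(3) _ _ _ gdot(3), where c=2]) simp_all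
    qed
  qed
  then show "alpha \<mu> \<Sigma> i = alpha \<mu>' \<Sigma>' i" using exhaust_3[of i] by blast
qed

end
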